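(* As formal power series in $q$ with coefficients Laurent polynomials in $z$, \[ (1-z)(1-z^{-1})\,\overline{S}(z,q)=\sum_{n=0}^\infty\sum_{m=-\infty}^\infty\bigl(\overline{N}(m,n)-\overline{M}(m,n)\bigr)z^mq^n . \]
   Context: Notation: $(a;q)_\infty=\prod_{k\ge0}(1-aq^k)$, $(a;q)_n=(a;q)_\infty/(aq^n;q)_\infty$, and $(a_1,\dots,a_j;q)_n=(a_1;q)_n\cdots(a_j;q)_n$ (also for $n=\infty$). Define \[ \overline{S}(z,q)=\sum_{n=1}^\infty\frac{q^n(-q^{n+1};q)_\infty(q^{n+1};q)_\infty}{(zq^n;q)_\infty(z^{-1}q^n;q)_\infty}. \] The numbers $\overline{N}(m,n)$ (number of overpartitions of $n$ with Dyson rank $m$, the rank being largest part minus number of parts) are defined by \[ \sum_{n\ge0}\sum_{m}\overline{N}(m,n)z^mq^n=\sum_{n=0}^\infty\frac{(-1;q)_n\,q^{n(n+1)/2}}{(zq;q)_n(z^{-1}q;q)_n}, \] and the numbers $\overline{M}(m,n)$ (a residual crank count for overpartitions) are defined by \[ \sum_{n\ge0}\sum_{m}\overline{M}(m,n)z^mq^n=\frac{(-q;q)_\infty(q;q)_\infty}{(zq;q)_\infty(z^{-1}q;q)_\infty}. \] *)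

theory Defs
  imports "HOL-Computational_Algebra.Formal_Power_Series" "HOL-Computational_Algebra.Formal_Laurent_Series"
begin

text \<open>Formal power series in q whose coefficients are formal Laurent series in z
  over the rationals (Laurent polynomials in z embed into this ring).
  Infinite sums and products are limits w.r.t. the standard (q-adic) metric on fps.\<close>

type_synonym qz_series = "rat fls fps"

definition qq :: qz_series where "qq = fps_X"
definition zz :: qz_series where "zz = fps_const fls_X"
definition zinv :: qz_series where "zinv = fps_const fls_X_inv"

definition qpoch :: "qz_series \<Rightarrow> nat \<Rightarrow> qz_series" where
  "qpoch a n = (\<Prod>k<n. 1 - a * qq ^ k)"

definition qpoch_inf :: "qz_series \<Rightarrow> qz_series" where
  "qpoch_inf a = lim (\<lambda>N. qpoch a N)"

definition Sbar :: qz_series where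
  "Sbar = (\<Sum>n. let m = Suc n in
      qq ^ m * qpoch_inf (- (qq ^ (m + 1))) * qpoch_inf (qq ^ (m + 1))
      * inverse (qpoch_inf (zz * qq ^ m) * qpoch_inf (zinv * qq ^ m)))"

definition Nbar_gen :: qz_series where
  "Nbar_gen = (\<Sum>n. qpoch (-1) n * qq ^ (n * (n + 1) div 2)
      * inverse (qpoch (zz * qq) n * qpoch (zinv * qq) n))"

definition Mbar_gen :: qz_series where
  "Mbar_gen = qpoch_inf (- qq) * qpoch_inf qq
      * inverse (qpoch_inf (zz * qq) * qpoch_inf (zinv * qq))"

definition Nbar :: "int \<Rightarrow> nat \<Rightarrow> rat" where
  "Nbar m n = fls_nth (fps_nth Nbar_gen n) m"

definition Mbar :: "int \<Rightarrow> nat \<Rightarrow> rat" where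
  "Mbar m n = fls_nth (fps_nth Mbar_gen n) m"

end

theory Submission
  imports Defs
begin


definition ph :: "'a::comm_ring_1 \<Rightarrow> 'a \<Rightarrow> nat \<Rightarrow> 'a" where "ph q w j = 1 - w*q^j + q^(2*j)"
definition Pr :: "'a::comm_ring_1 \<Rightarrow> 'a \<Rightarrow> nat \<Rightarrow> nat \<Rightarrow> 'a" where "Pr q w a m = (\<Prod>j<m. ph q w (a+j))"
definition Aq :: "'a::comm_ring_1 \<Rightarrow> nat \<Rightarrow> 'a" where "Aq q k = (\<Prod>j<k. 1 + q^j) * q^(k*(k+1) div 2)"
definition Bq :: "'a::comm_ring_1 \<Rightarrow> nat \<Rightarrow> nat \<Rightarrow> 'a" where "Bq q n k = (\<Prod>j<k. 1 - q^(n-j))"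
definition aa :: "'a::comm_ring_1 \<Rightarrow> 'a \<Rightarrow> nat \<Rightarrow> nat \<Rightarrow> 'a" where "aa q w n k = Aq q k * Bq q n k * Pr q w (k+1) (n-k)"
definition LL :: "'a::comm_ring_1 \<Rightarrow> 'a \<Rightarrow> nat \<Rightarrow> 'a" where "LL q w n = (\<Sum>k<Suc n. aa q w n k)"
definition Rt :: "'a::comm_ring_1 \<Rightarrow> 'a \<Rightarrow> nat \<Rightarrow> nat \<Rightarrow> 'a" where "Rt q w n k = q^k * Pr q w 0 k * (\<Prod>j<n-k. 1 - q^(2*(k+1+j)))"
definition RR :: "'a::comm_ring_1 \<Rightarrow> 'a \<Rightarrow> nat \<Rightarrow> 'a" where "RR q w n = (\<Sum>k<Suc n. Rt q w n k)"

lemma Pr_Suc: "Pr q w a (Suc m) = Pr q w a m * ph q w (a+m)"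
  by (simp add: Pr_def)
lemma Pr_Suc': "Pr q w a (Suc m) = ph q w a * Pr q w (Suc a) m"
  unfolding Pr_def prod.lessThan_Suc_shift by simp
lemma Aq_Suc: "Aq q (Suc k) = Aq q k * (1 + q^k) * q^(Suc k)"
proof -
  have "Suc k * (Suc k + 1) div 2 = k*(k+1) div 2 + Suc k" by (induct k) auto
  thus ?thesis by (simp add: Aq_def power_add algebra_simps)
qed
lemma Bq_Suc: "Bq q n (Suc k) = Bq q n k * (1 - q^(n-k))"
  by (simp add: Bq_def)
lemma Bq_shift: "(1 - q^(Suc n)) * Bq q n k = Bq q (Suc n) k * (1 - q^(Suc n - k))"
proof (induct k)
  case 0 then show ?case by (simp add: Bq_def)
next
  case (Suc k)
  have "(1 - q^(Suc n)) * Bq q n (Suc k) = ((1 - q^(Suc n)) * Bq q n k) * (1 - q^(n-k))"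
    by (simp add: Bq_Suc mult.assoc)
  also have "\<dots> = Bq q (Suc n) k * (1 - q^(Suc n - k)) * (1 - q^(n-k))" using Suc by simp
  also have "\<dots> = Bq q (Suc n) (Suc k) * (1 - q^(Suc n - Suc k))"
    by (simp add: Bq_Suc)
  finally show ?case .
qed
lemma Bq_zero: "k > n \<Longrightarrow> Bq q n k = 0"
  unfolding Bq_def by (rule prod_zero) (auto intro!: bexI[of _ n])

lemma RR_Suc: "RR q w (Suc n) = (1 - q^(2*Suc n)) * RR q w n + q^(Suc n) * Pr q w 0 (Suc n)"
proof -
  have "Rt q w (Suc n) k = (1 - q^(2*Suc n)) * Rt q w n k" if "k < Suc n" for k
  proof -
    have e: "Suc n - k = Suc (n - k)" using that by simp
    have "k + 1 + (n - k) = Suc n" using that by simp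
    then show ?thesis unfolding Rt_def e prod.lessThan_Suc by (simp add: algebra_simps)
  qed
  then have "(\<Sum>k<Suc n. Rt q w (Suc n) k) = (\<Sum>k<Suc n. (1 - q^(2*Suc n)) * Rt q w n k)"
    by (intro sum.cong) auto
  also have "\<dots> = (1 - q^(2*Suc n)) * RR q w n" by (simp only: RR_def sum_distrib_left)
  finally have 1: "(\<Sum>k<Suc n. Rt q w (Suc n) k) = (1 - q^(2*Suc n)) * RR q w n" .
  moreover have "Rt q w (Suc n) (Suc n) = q^(Suc n) * Pr q w 0 (Suc n)" by (simp add: Rt_def)
  ultimately show ?thesis using 1 by (simp add: RR_def)
qed

lemma poly_id:
  fixes u x w :: "'a::comm_ring_1"
  shows "(1 - u*x) * (1 - w*(u*x) + (u*x)^2) * (1 - w*(u*x) + (u*x)^2)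
     - (1 - (u*x)^2) * (1 - w*(u*x) + (u*x)^2) * (1 - u)
   = (1 - u*x) * (1 - w*(u*x) + (u*x)^2) * (u * (1 - w*x + x^2) - u*x*(1+x)*(1-u))"
  by (simp add: algebra_simps power2_eq_square)

lemma perk:
  fixes q w :: "'a::idom"
  assumes hq: "1 - q^(Suc n) \<noteq> 0" and k: "k \<le> n"
  shows "ph q w (Suc n) * aa q w (Suc n) k - (1 - q^(2*Suc n)) * ph q w (Suc n) * aa q w n k
     = q^(Suc n - k) * ph q w k * aa q w (Suc n) k - q^(Suc n - Suc k) * ph q w (Suc k) * aa q w (Suc n) (Suc k)"
proof -
  define N where "N = Suc n"
  define Y where "Y = Pr q w (k+1) (n-k)"
  define G where "G = Aq q k * Bq q N k * Y"
  define u where "u = q^(N-k)"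
  define x where "x = q^k"
  have Nk: "N - k = Suc (n - k)" using k by (simp add: N_def)
  have qN: "q^N = u*x" unfolding u_def x_def power_add[symmetric] using k by (simp add: N_def)
  have q2N: "q^(2*N) = (u*x)^2" by (simp add: power_mult[symmetric] qN[symmetric] mult.commute)
  have phN: "ph q w N = 1 - w*(u*x) + (u*x)^2" by (simp add: ph_def qN q2N)
  have phk: "ph q w k = 1 - w*x + x^2" by (simp add: ph_def x_def power_mult[symmetric] mult.commute)
  have e1: "k + 1 + (n - k) = N" using k by (simp add: N_def)
  have f1: "aa q w N k = G * ph q w N"
    unfolding aa_def G_def Y_def Nk Pr_Suc e1 by (simp add: mult.assoc)
  have f2: "(1 - q^N) * aa q w n k = G * (1 - u)"
  proof -
    have "(1 - q^N) * aa q w n k = Aq q k * ((1 - q^(Suc n)) * Bq q n k) * Y"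
      by (simp add: aa_def Y_def N_def algebra_simps)
    also have "\<dots> = G * (1 - u)" unfolding Bq_shift G_def u_def N_def by (simp add: algebra_simps)
    finally show ?thesis .
  qed
  have e2: "N - Suc k = n - k" by (simp add: N_def)
  have e3: "Suc k + 1 = Suc (k+1)" by simp
  have f3: "ph q w (Suc k) * aa q w N (Suc k) = G * ((1 + x) * q^(Suc k) * (1 - u)) * ph q w N"
  proof -
    have "ph q w (Suc k) * Pr q w (Suc k + 1) (n - k) = Pr q w (Suc k) (Suc (n-k))"
      by (simp add: Pr_Suc')
    also have "\<dots> = Y * ph q w N" unfolding Pr_Suc Y_def using e1 by simp
    finally have p: "ph q w (Suc k) * Pr q w (Suc k + 1) (n - k) = Y * ph q w N" .
    have "ph q w (Suc k) * aa q w N (Suc k) = Aq q (Suc k) * Bq q N (Suc k) * (ph q w (Suc k) * Pr q w (Suc k + 1) (n - k))"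
      unfolding aa_def e2 by (simp add: algebra_simps)
    also have "\<dots> = G * ((1 + x) * q^(Suc k) * (1 - u)) * ph q w N"
      unfolding p Aq_Suc Bq_Suc G_def x_def u_def by (simp add: algebra_simps)
    finally show ?thesis .
  qed
  have qq: "q^(N - Suc k) * q^(Suc k) = u*x" unfolding power_add[symmetric] qN[symmetric] using k by (simp add: N_def)
  have "(1 - q^N) * (ph q w N * aa q w N k - (1 - q^(2*N)) * ph q w N * aa q w n k)
      = G * ((1 - u*x) * (1 - w*(u*x) + (u*x)^2) * (1 - w*(u*x) + (u*x)^2)
     - (1 - (u*x)^2) * (1 - w*(u*x) + (u*x)^2) * (1 - u))"
  proof -
    have "(1 - q^N) * (ph q w N * aa q w N k - (1 - q^(2*N)) * ph q w N * aa q w n k)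
       = (1 - q^N) * ph q w N * aa q w N k - (1 - q^(2*N)) * ph q w N * ((1 - q^N) * aa q w n k)"
      by (simp add: algebra_simps)
    also have "\<dots> = G * ((1 - u*x) * (1 - w*(u*x) + (u*x)^2) * (1 - w*(u*x) + (u*x)^2)
     - (1 - (u*x)^2) * (1 - w*(u*x) + (u*x)^2) * (1 - u))"
      unfolding f1 f2 unfolding qN q2N phN by (simp add: algebra_simps)
    finally show ?thesis .
  qed
  also have "\<dots> = G * ((1 - u*x) * (1 - w*(u*x) + (u*x)^2) * (u * (1 - w*x + x^2) - u*x*(1+x)*(1-u)))"
    by (simp only: poly_id)
  also have "\<dots> = (1 - q^N) * (q^(N - k) * ph q w k * aa q w N k - q^(N - Suc k) * ph q w (Suc k) * aa q w N (Suc k))"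
  proof -
    have "(1 - q^N) * (q^(N - k) * ph q w k * aa q w N k - q^(N - Suc k) * ph q w (Suc k) * aa q w N (Suc k))
      = (1 - q^N) * (q^(N - k) * ph q w k * aa q w N k - q^(N - Suc k) * (ph q w (Suc k) * aa q w N (Suc k)))"
      by (simp add: algebra_simps)
    also have "\<dots> = (1 - q^N) * (u * ph q w k * (G * ph q w N) - (q^(N - Suc k) * q^(Suc k)) * G * ((1 + x) * (1 - u)) * ph q w N)"
      unfolding f3 f1 u_def by (simp add: algebra_simps)
    also have "\<dots> = G * ((1 - u*x) * (1 - w*(u*x) + (u*x)^2) * (u * (1 - w*x + x^2) - u*x*(1+x)*(1-u)))"
      unfolding qq qN phN phk by (simp add: algebra_simps)
    finally show ?thesis by simp
  qed
  finally have "(1 - q^N) * (ph q w N * aa q w N k - (1 - q^(2*N)) * ph q w N * aa q w n k)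
     = (1 - q^N) * (q^(N - k) * ph q w k * aa q w N k - q^(N - Suc k) * ph q w (Suc k) * aa q w N (Suc k))" .
  then show ?thesis using hq unfolding N_def by simp
qed


lemma aa_zero: "k > n \<Longrightarrow> aa q w n k = 0"
  by (simp add: aa_def Bq_zero)

lemma LL_Suc:
  fixes q w :: "'a::idom"
  assumes hq: "1 - q^(Suc n) \<noteq> 0" and hph: "ph q w (Suc n) \<noteq> 0"
  shows "LL q w (Suc n) = (1 - q^(2*Suc n)) * LL q w n + q^(Suc n) * Pr q w 0 (Suc n)"
proof -
  define N where "N = Suc n"
  define g where "g k = q^(N - k) * ph q w k * aa q w N k" for k
  have step: "ph q w N * aa q w N k - (1 - q^(2*N)) * ph q w N * aa q w n k = g k - g (Suc k)"
    if "k < Suc N" for k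
  proof (cases "k \<le> n")
    case True then show ?thesis using perk[OF hq True] by (simp add: g_def N_def)
  next
    case False
    then have kN: "k = N" using that by (simp add: N_def)
    show ?thesis by (simp add: g_def kN aa_zero N_def)
  qed
  have "(\<Sum>k<Suc N. ph q w N * aa q w N k - (1 - q^(2*N)) * ph q w N * aa q w n k) = (\<Sum>k<Suc N. g k - g (Suc k))"
    using step by (intro sum.cong) auto
  also have "\<dots> = g 0 - g (Suc N)" by (rule sum_lessThan_telescope')
  also have "\<dots> = q^N * (ph q w 0 * Pr q w 1 N)" by (simp add: g_def aa_zero aa_def Aq_def Bq_def)
  also have "ph q w 0 * Pr q w 1 N = Pr q w 0 N * ph q w N"
    by (metis One_nat_def Pr_Suc Pr_Suc' add_0)
  finally have A: "(\<Sum>k<Suc N. ph q w N * aa q w N k - (1 - q^(2*N)) * ph q w N * aa q w n k) = q^N * (Pr q w 0 N * ph q w N)" .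
  have B: "(\<Sum>k<Suc N. aa q w n k) = LL q w n"
    by (simp add: N_def LL_def aa_zero)
  have "(\<Sum>k<Suc N. ph q w N * aa q w N k - (1 - q^(2*N)) * ph q w N * aa q w n k)
      = ph q w N * (\<Sum>k<Suc N. aa q w N k) - (1 - q^(2*N)) * ph q w N * (\<Sum>k<Suc N. aa q w n k)"
    by (simp only: sum_subtractf sum_distrib_left)
  also have "\<dots> = ph q w N * (LL q w N - (1 - q^(2*N)) * (\<Sum>k<Suc N. aa q w n k))"
    by (simp add: LL_def algebra_simps)
  finally have C: "(\<Sum>k<Suc N. ph q w N * aa q w N k - (1 - q^(2*N)) * ph q w N * aa q w n k)
      = ph q w N * (LL q w N - (1 - q^(2*N)) * (\<Sum>k<Suc N. aa q w n k))" .
  with A B C have "ph q w N * (LL q w N - (1 - q^(2*N)) * LL q w n) = ph q w N * (q^N * Pr q w 0 N)"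
    by (simp add: algebra_simps)
  then have "LL q w N - (1 - q^(2*N)) * LL q w n = q^N * Pr q w 0 N" using hph by (simp add: N_def)
  then show ?thesis by (simp add: N_def algebra_simps)
qed

lemma LL_RR:
  fixes q w :: "'a::idom"
  assumes hq: "\<And>n. 1 - q^(Suc n) \<noteq> 0" and hph: "\<And>n. ph q w (Suc n) \<noteq> 0"
  shows "LL q w n = RR q w n"
proof (induct n)
  case 0 then show ?case by (simp add: LL_def RR_def aa_def Rt_def Aq_def Bq_def Pr_def)
next
  case (Suc n) then show ?case by (simp add: LL_Suc[OF hq hph] RR_Suc)
qed



lemma zz_zinv: "zz * zinv = 1"
proof -
  have "fls_X * fls_X_inv = (1 :: rat fls)"
    by (simp add: fls_X_inv_times_conv_shift mult.commute)
  then have "fps_const fls_X * fps_const fls_X_inv = (fps_const 1 :: rat fls fps)"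
    by (simp only: fps_const_mult)
  then show ?thesis unfolding zz_def zinv_def by simp
qed

definition og :: "nat \<Rightarrow> 'a::zero fps \<Rightarrow> bool" where "og m f \<longleftrightarrow> (\<forall>i<m. f$i = 0)"
definition ceq :: "nat \<Rightarrow> 'a::group_add fps \<Rightarrow> 'a fps \<Rightarrow> bool" where "ceq m f g \<longleftrightarrow> og m (f - g)"

lemma og_0[simp]: "og 0 f" by (simp add: og_def)
lemma og_zero[simp]: "og m 0" by (simp add: og_def)
lemma og_mono: "og a f \<Longrightarrow> b \<le> a \<Longrightarrow> og b f" by (auto simp: og_def)
lemma og_add: "og m f \<Longrightarrow> og m (g::'a::monoid_add fps) \<Longrightarrow> og m (f + g)" by (simp add: og_def)
lemma og_diff: "og m f \<Longrightarrow> og m (g::'a::group_add fps) \<Longrightarrow> og m (f - g)" by (simp add: og_def)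
lemma og_uminus: "og m (f::'a::group_add fps) \<Longrightarrow> og m (- f)" by (simp add: og_def)
lemma og_mult:
  fixes f g :: "'a::comm_ring_1 fps"
  assumes "og a f" "og b g" shows "og (a+b) (f*g)"
  unfolding og_def
proof (intro allI impI)
  fix i assume i: "i < a + b"
  have "f $ j * g $ (i - j) = 0" if "j \<in> {0..i}" for j
  proof (cases "j < a")
    case True then show ?thesis using assms(1) by (simp add: og_def)
  next
    case False then have "i - j < b" using i that by auto
    then show ?thesis using assms(2) by (simp add: og_def)
  qed
  then show "(f * g) $ i = 0" by (simp add: fps_mult_nth)
qed
lemma og_X_power: "og m (fps_X ^ m :: 'a::comm_ring_1 fps)" by (simp add: og_def)
lemma og_mult_X_power: "og m (c * fps_X ^ m :: 'a::comm_ring_1 fps)"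
  using og_mult[of 0 c m "fps_X^m"] og_X_power[of m] by simp

lemma ceq_refl[simp]: "ceq m f f" by (simp add: ceq_def)
lemma ceq_sym: "ceq m f g \<Longrightarrow> ceq m g f" unfolding ceq_def og_def by auto
lemma ceq_trans: "ceq m f g \<Longrightarrow> ceq m g h \<Longrightarrow> ceq m f h" unfolding ceq_def og_def by auto
lemma ceq_mono: "ceq a f g \<Longrightarrow> b \<le> a \<Longrightarrow> ceq b f g" unfolding ceq_def using og_mono by blast
lemma ceq_nth: "ceq m f g \<Longrightarrow> i < m \<Longrightarrow> f $ i = g $ i" unfolding ceq_def og_def by auto
lemma ceq_add: "ceq m f f' \<Longrightarrow> ceq m g (g'::'a::ab_group_add fps) \<Longrightarrow> ceq m (f+g) (f'+g')"
  unfolding ceq_def og_def by (auto simp: algebra_simps)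
lemma ceq_diff: "ceq m f f' \<Longrightarrow> ceq m g (g'::'a::ab_group_add fps) \<Longrightarrow> ceq m (f-g) (f'-g')"
  unfolding ceq_def og_def by (auto simp: algebra_simps)
lemma ceq_mult:
  fixes f g :: "'a::comm_ring_1 fps"
  assumes "ceq m f f'" "ceq m g g'" shows "ceq m (f*g) (f'*g')"
proof -
  have "f*g - f'*g' = (f - f')*g + f'*(g - g')" by (simp add: algebra_simps)
  moreover have "og m ((f - f')*g)" using og_mult[of m "f-f'" 0 g] assms(1) by (simp add: ceq_def)
  moreover have "og m (f'*(g - g'))" using og_mult[of 0 f' m "g-g'"] assms(2) by (simp add: ceq_def)
  ultimately show ?thesis unfolding ceq_def by (simp add: og_add)
qed
lemma ceq_og: "og m (f - g) \<Longrightarrow> ceq m f g" by (simp add: ceq_def)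
lemma ceq_prod:
  fixes f g :: "'b \<Rightarrow> 'a::comm_ring_1 fps"
  shows "(\<And>i. i \<in> A \<Longrightarrow> ceq m (f i) (g i)) \<Longrightarrow> ceq m (prod f A) (prod g A)"
proof (induct A rule: infinite_finite_induct)
  case (insert x F) then show ?case by (simp add: ceq_mult)
qed auto
lemma ceq_sum:
  fixes f g :: "'b \<Rightarrow> 'a::comm_ring_1 fps"
  shows "(\<And>i. i \<in> A \<Longrightarrow> ceq m (f i) (g i)) \<Longrightarrow> ceq m (sum f A) (sum g A)"
proof (induct A rule: infinite_finite_induct)
  case (insert x F) then show ?case by (simp add: ceq_add)
qed auto
lemma ceq_all: "(\<And>m. ceq m f g) \<Longrightarrow> f = g"
  by (rule fps_ext) (metis ceq_nth lessI)

lemma ceq_inverse: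
  fixes f g :: "'a::field fps"
  assumes f0: "f $ 0 \<noteq> 0" and c: "ceq m f g"
  shows "ceq m (inverse f) (inverse g)"
proof (cases "m = 0")
  case True then show ?thesis by (simp add: ceq_def)
next
  case False
  then have "g $ 0 = f $ 0" using ceq_nth[OF c] by simp
  with f0 have g0: "g $ 0 \<noteq> 0" by simp
  have "inverse f - inverse g = inverse f * inverse g * (g - f)"
    using inverse_mult_eq_1[OF f0] inverse_mult_eq_1[OF g0] by (simp add: algebra_simps)
  moreover have "og m (g - f)" using c unfolding ceq_def og_def by auto
  ultimately show ?thesis unfolding ceq_def using og_mult[of 0 "inverse f * inverse g" m "g - f"] by simp
qed


lemma stable_lim:
  fixes f :: "nat \<Rightarrow> 'a::comm_ring_1 fps"
  assumes st: "\<And>M N N'. h M \<le> N \<Longrightarrow> N \<le> N' \<Longrightarrow> ceq M (f N') (f N)"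
  shows "f \<longlonglongrightarrow> lim f" "\<And>M N. h M \<le> N \<Longrightarrow> ceq M (lim f) (f N)"
proof -
  define g where "g = Abs_fps (\<lambda>t. f (h (Suc t)) $ t)"
  have L: "f \<longlonglongrightarrow> g"
  proof (rule tendsto_fpsI)
    fix t
    show "eventually (\<lambda>N. f N $ t = g $ t) sequentially"
      unfolding eventually_sequentially g_def
    proof (intro exI allI impI)
      fix N assume "h (Suc t) \<le> N"
      then have "ceq (Suc t) (f N) (f (h (Suc t)))" by (intro st) auto
      then show "f N $ t = Abs_fps (\<lambda>t. f (h (Suc t)) $ t) $ t" using ceq_nth[of "Suc t" "f N" _ t] by simp
    qed
  qed
  then have lg: "lim f = g" by (rule limI)
  then show "f \<longlonglongrightarrow> lim f" using L by simp
  fix M N assume hm: "h M \<le> N"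
  show "ceq M (lim f) (f N)"
    unfolding lg ceq_def og_def
  proof (intro allI impI)
    fix i assume i: "i < M"
    define N2 where "N2 = max N (h (Suc i))"
    have "ceq (Suc i) (f N2) (f (h (Suc i)))" by (intro st) (auto simp: N2_def)
    then have "f N2 $ i = f (h (Suc i)) $ i" using ceq_nth by blast
    moreover have "ceq M (f N2) (f N)" by (intro st[OF hm]) (auto simp: N2_def)
    then have "f N2 $ i = f N $ i" using ceq_nth i by blast
    ultimately show "(g - f N) $ i = 0" by (simp add: g_def)
  qed
qed

lemma og_shift: "og s (a::'a::comm_ring_1 fps) \<Longrightarrow> og (s + N) (a * fps_X ^ N)"
  using og_mult[of s a N "fps_X^N"] og_X_power[of N] by simp

lemma qpoch_stable:
  assumes a: "og s a" and M: "M \<le> N + s" and NN: "N \<le> N'"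
  shows "ceq M (qpoch a N') (qpoch a N)"
  using NN
proof (induct N' rule: dec_induct)
  case base then show ?case by simp
next
  case (step n)
  have "og M (a * qq ^ n)" using og_mono[OF og_shift[OF a, of n]] M step(1) by (simp add: qq_def)
  then have c: "ceq M (1 - a * qq^n) 1" by (simp add: ceq_def og_uminus)
  have "ceq M (qpoch a n * (1 - a * qq^n)) (qpoch a N * 1)" by (rule ceq_mult[OF step(3) c])
  then show ?case by (simp add: qpoch_def)
qed

lemma qpoch_inf_ceq:
  assumes a: "og s a" and M: "M \<le> N + s"
  shows "ceq M (qpoch_inf a) (qpoch a N)"
proof -
  have "ceq M (lim (qpoch a)) (qpoch a N)"
  proof (rule stable_lim(2)[where h="\<lambda>M. M - s"])
    show "ceq M' (qpoch a N2) (qpoch a N1)" if "M' - s \<le> N1" "N1 \<le> N2" for M' N1 N2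
      by (rule qpoch_stable[OF a]) (use that in linarith)+
  qed (use M in linarith)
  then show ?thesis by (simp add: qpoch_inf_def)
qed

lemma suminf_ceq:
  fixes g :: "nat \<Rightarrow> 'a::comm_ring_1 fps"
  assumes og: "\<And>i. og i (g i)" and MN: "M \<le> N"
  shows "ceq M (suminf g) (\<Sum>i<N. g i)"
proof -
  define S where "S N = (\<Sum>i<N. g i)" for N
  have st: "ceq M (S N') (S N)" if "M \<le> N" "N \<le> N'" for M N N'
    using that(2)
  proof (induct N' rule: dec_induct)
    case base then show ?case by simp
  next
    case (step n)
    have "og M (g n)" using og_mono[OF og[of n]] that(1) step(1) by simp
    then have "ceq M (g n) 0" by (simp add: ceq_def)
    from ceq_add[OF step(3) this] show ?case by (simp add: S_def)
  qed
  have st': "\<And>M N N'. M \<le> N \<Longrightarrow> N \<le> N' \<Longrightarrow> ceq M (S N') (S N)" by (rule st)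
  have L: "S \<longlonglongrightarrow> lim S" by (rule stable_lim(1)[where h="\<lambda>M. M", OF st'])
  then have "g sums lim S" unfolding sums_def S_def by simp
  then have "suminf g = lim S" by (rule sums_unique[symmetric])
  moreover have "ceq M (lim S) (S N)" by (rule stable_lim(2)[where h="\<lambda>M. M", OF st' MN])
  ultimately show ?thesis by (simp add: S_def)
qed



definition ww :: qz_series where "ww = zz + zinv"

lemma F1: "(1 - zz*qq^j)*(1 - zinv*qq^j) = ph qq ww j"
proof -
  have "(1 - zz*qq^j)*(1 - zinv*qq^j) = 1 - (zz + zinv)*qq^j + (zz*zinv)*(qq^j*qq^j)"
    by (simp add: algebra_simps)
  also have "\<dots> = ph qq ww j" by (simp add: zz_zinv ph_def ww_def power_add[symmetric] mult_2)
  finally show ?thesis .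
qed

lemma F2: "qpoch (zz*qq^s) N * qpoch (zinv*qq^s) N = Pr qq ww s N"
  unfolding qpoch_def Pr_def prod.distrib[symmetric]
  by (rule prod.cong) (simp_all add: F1[symmetric] power_add mult.assoc)

lemma F3: "qpoch (-(qq^s)) N * qpoch (qq^s) N = (\<Prod>j<N. 1 - qq^(2*(s+j)))"
  unfolding qpoch_def prod.distrib[symmetric]
proof (rule prod.cong)
  fix j
  have "(1 - - (qq ^ s) * qq ^ j) * (1 - qq ^ s * qq ^ j) = 1 - (qq^(s+j))^2"
    by (simp add: power_add algebra_simps power2_eq_square)
  then show "(1 - - (qq ^ s) * qq ^ j) * (1 - qq ^ s * qq ^ j) = 1 - qq ^ (2 * (s + j))"
    by (simp add: power_mult[symmetric] mult.commute)
qed simp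

lemma F4: "qpoch (-1) n = (\<Prod>j<n. 1 + qq^j)"
  by (simp add: qpoch_def)

lemma og_q: "og s (c * qq^s)" by (simp add: qq_def og_mult_X_power)

lemma qpoch_split: "qpoch a (m + M) = qpoch a m * qpoch (a * qq^m) M"
proof (induct M)
  case 0 then show ?case by (simp add: qpoch_def)
next
  case (Suc M)
  have "qpoch a (m + Suc M) = qpoch a (m + M) * (1 - a * qq^(m+M))" by (simp add: qpoch_def)
  also have "\<dots> = qpoch a m * (qpoch (a * qq^m) M * (1 - a * qq^m * qq^M))"
    using Suc by (simp add: power_add mult.assoc)
  finally show ?case by (simp add: qpoch_def)
qed

lemma E1: "qpoch_inf a = qpoch a m * qpoch_inf (a * qq^m)"
proof (rule ceq_all)
  fix M
  have "ceq M (qpoch_inf a) (qpoch a (m + M))" by (rule qpoch_inf_ceq[of 0]) auto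
  moreover have "ceq M (qpoch_inf (a * qq^m)) (qpoch (a * qq^m) M)" by (rule qpoch_inf_ceq[of 0]) auto
  ultimately show "ceq M (qpoch_inf a) (qpoch a m * qpoch_inf (a * qq ^ m))"
    by (metis ceq_mult ceq_refl ceq_sym ceq_trans qpoch_split)
qed

lemma qpoch_inf_0: "og 1 a \<Longrightarrow> qpoch_inf a $ 0 = 1"
proof -
  assume "og 1 a"
  from qpoch_inf_ceq[OF this, of 1 0] have "ceq 1 (qpoch_inf a) 1" by (simp add: qpoch_def)
  then show ?thesis using ceq_nth[of 1 _ 1 0] by simp
qed

definition VV :: "nat \<Rightarrow> qz_series" where "VV m = qpoch_inf (zz*qq^m) * qpoch_inf (zinv*qq^m)"
definition UU :: "nat \<Rightarrow> qz_series" where "UU m = qpoch_inf (-(qq^(m+1))) * qpoch_inf (qq^(m+1))"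

lemma VV_0: "m \<ge> 1 \<Longrightarrow> VV m $ 0 = 1"
proof -
  assume m: "m \<ge> 1"
  have "og 1 (zz*qq^m)" "og 1 (zinv*qq^m)" using og_mono[OF og_q] m by auto
  then show ?thesis by (simp add: VV_def qpoch_inf_0)
qed

lemma VV_split: "VV 1 = Pr qq ww 1 n * VV (Suc n)"
proof -
  have "qpoch_inf (zz*qq^1) = qpoch (zz*qq) n * qpoch_inf (zz*qq^Suc n)"
    using E1[of "zz*qq" n] by (simp add: mult.assoc)
  moreover have "qpoch_inf (zinv*qq^1) = qpoch (zinv*qq) n * qpoch_inf (zinv*qq^Suc n)"
    using E1[of "zinv*qq" n] by (simp add: mult.assoc)
  ultimately show ?thesis using F2[of 1 n] unfolding VV_def by (simp add: algebra_simps)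
qed

lemma Pr_0: "a \<ge> 1 \<Longrightarrow> Pr qq ww a n $ 0 = 1"
proof -
  assume a: "a \<ge> 1"
  have c: "ceq 1 (Pr qq ww a n) (\<Prod>j<n. 1)" unfolding Pr_def
  proof (rule ceq_prod)
    fix j
    have "og 1 (- (ww * qq^(a+j)) + qq^(2*(a+j)))"
      using og_mono[OF og_q[of "a+j" ww]] og_mono[OF og_q[of "2*(a+j)" 1]] a
      by (intro og_add og_uminus) auto
    then show "ceq 1 (ph qq ww (a + j)) 1" by (simp add: ceq_def ph_def)
  qed
  show ?thesis using ceq_nth[OF c, of 0] by simp
qed


lemma tri_ge: "(n::nat) \<le> n*(n+1) div 2"
proof -
  have "(2::nat)*n \<le> n*(n+1)" by (cases n) auto
  then show ?thesis by linarith
qed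

lemma unit_inv: "f $ 0 = 1 \<Longrightarrow> f * inverse f = (1::qz_series)"
  by (rule inverse_mult_eq_1') simp

lemma Aq_og: "og (k*(k+1) div 2) (Aq qq k)"
  unfolding Aq_def using og_q by simp

lemma part_a: "ceq K (VV 1 * Nbar_gen) (LL qq ww K)"
proof -
  define Nt where "Nt n = qpoch (-1) n * qq^(n*(n+1) div 2) * inverse (qpoch (zz*qq) n * qpoch (zinv*qq) n)" for n
  have NB: "Nbar_gen = suminf Nt" unfolding Nbar_gen_def Nt_def by simp
  have ogN: "og n (Nt n)" for n
  proof -
    have "og (n*(n+1) div 2 + 0) (qpoch (-1) n * qq^(n*(n+1) div 2) * inverse (qpoch (zz*qq) n * qpoch (zinv*qq) n))"
      by (rule og_mult[OF og_q og_0])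
    then show ?thesis unfolding Nt_def using og_mono[OF _ tri_ge[of n]] by simp
  qed
  have s1: "ceq K (VV 1 * Nbar_gen) (\<Sum>n<K. VV 1 * Nt n)"
    unfolding NB sum_distrib_left[symmetric] by (rule ceq_mult[OF ceq_refl suminf_ceq[OF ogN]]) simp
  have s2: "ceq K (VV 1 * Nt n) (aa qq ww K n)" if n: "n < K" for n
  proof -
    have P0: "Pr qq ww 1 n * inverse (Pr qq ww 1 n) = 1" by (rule unit_inv[OF Pr_0]) simp
    have "VV 1 * Nt n = Aq qq n * VV (Suc n) * (Pr qq ww 1 n * inverse (Pr qq ww 1 n))"
      unfolding Nt_def VV_split[of n] F4 Aq_def using F2[of 1 n] by (simp add: algebra_simps)
    also have "\<dots> = Aq qq n * VV (Suc n)" using P0 by simp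
    finally have e: "VV 1 * Nt n = Aq qq n * VV (Suc n)" .
    have c1: "ceq K (qpoch_inf (zz*qq^Suc n)) (qpoch (zz*qq^Suc n) (K - n))"
      by (rule qpoch_inf_ceq[OF og_q]) (use n in simp)
    have c2: "ceq K (qpoch_inf (zinv*qq^Suc n)) (qpoch (zinv*qq^Suc n) (K - n))"
      by (rule qpoch_inf_ceq[OF og_q]) (use n in simp)
    have cV: "ceq K (VV (Suc n)) (Pr qq ww (Suc n) (K - n))"
      using ceq_mult[OF c1 c2] unfolding VV_def F2 .
    have cB: "ceq (K - n + 1) (Bq qq K n) (\<Prod>j<n. 1)"
      unfolding Bq_def
    proof (rule ceq_prod)
      fix j assume "j \<in> {..<n}"
      then have "K - n + 1 \<le> K - j" using n by auto
      then have "og (K - n + 1) (qq^(K-j))" using og_mono[OF og_q[of "K-j" 1]] by simp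
      then show "ceq (K - n + 1) (1 - qq ^ (K - j)) 1" by (simp add: ceq_def og_uminus)
    qed
    have "og (n*(n+1) div 2 + (K - n + 1)) (Aq qq n * (Bq qq K n - 1))"
      by (rule og_mult[OF Aq_og]) (use cB in \<open>simp add: ceq_def\<close>)
    moreover have "K \<le> n*(n+1) div 2 + (K - n + 1)" using tri_ge[of n] n by linarith
    ultimately have "og K (Aq qq n * (Bq qq K n - 1))" by (rule og_mono)
    then have "og K (Aq qq n * Bq qq K n - Aq qq n)" by (simp add: algebra_simps)
    then have cA: "ceq K (Aq qq n) (Aq qq n * Bq qq K n)" unfolding ceq_def og_def by auto
    have "ceq K (Aq qq n * VV (Suc n)) (Aq qq n * Bq qq K n * Pr qq ww (Suc n) (K - n))"
      by (rule ceq_mult[OF cA cV])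
    then show ?thesis unfolding e aa_def by simp
  qed
  have s3: "ceq K (aa qq ww K K) 0"
  proof -
    have "og (K*(K+1) div 2 + 0) (Aq qq K * (Bq qq K K * Pr qq ww (K+1) (K-K)))"
      by (rule og_mult[OF Aq_og og_0])
    then have "og K (Aq qq K * (Bq qq K K * Pr qq ww (K+1) (K-K)))" using og_mono[OF _ tri_ge[of K]] by simp
    then have "og K (aa qq ww K K)" unfolding aa_def by (simp add: mult.assoc)
    then show ?thesis by (simp add: ceq_def)
  qed
  have "ceq K (\<Sum>n<K. VV 1 * Nt n) (\<Sum>n<K. aa qq ww K n)" by (rule ceq_sum) (use s2 in auto)
  from ceq_trans[OF s1 this] have "ceq K (VV 1 * Nbar_gen) ((\<Sum>n<K. aa qq ww K n) + 0)" by simp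
  moreover have "ceq K ((\<Sum>n<K. aa qq ww K n) + 0) ((\<Sum>n<K. aa qq ww K n) + aa qq ww K K)"
    by (rule ceq_add[OF ceq_refl ceq_sym[OF s3]])
  ultimately have "ceq K (VV 1 * Nbar_gen) ((\<Sum>n<K. aa qq ww K n) + aa qq ww K K)" by (rule ceq_trans)
  then show ?thesis unfolding LL_def by simp
qed


lemma og_qpow: "og s (qq^s * c)" using og_q[of s c] by (simp add: mult.commute)

lemma og_mq: "og s (-(qq^s))" using og_uminus[OF og_q[of s 1]] by simp

lemma UU_ceq: "n \<le> K \<Longrightarrow> ceq K (UU n) (\<Prod>j<K - n. 1 - qq^(2*(n + 1 + j)))"
proof -
  assume n: "n \<le> K"
  have c1: "ceq K (qpoch_inf (-(qq^(n+1)))) (qpoch (-(qq^(n+1))) (K - n))"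
    by (rule qpoch_inf_ceq[OF og_mq]) (use n in simp)
  have c2: "ceq K (qpoch_inf (qq^(n+1))) (qpoch (qq^(n+1)) (K - n))"
    by (rule qpoch_inf_ceq[OF og_qpow[of _ 1, simplified]]) (use n in simp)
  show ?thesis using ceq_mult[OF c1 c2] unfolding UU_def F3 by simp
qed

lemma part_b: "ceq K (VV 1 * ((1 - zz) * (1 - zinv) * Sbar) + VV 1 * Mbar_gen) (RR qq ww K)"
proof -
  define St where "St n = qq ^ Suc n * qpoch_inf (- (qq ^ (Suc n + 1))) * qpoch_inf (qq ^ (Suc n + 1))
      * inverse (qpoch_inf (zz * qq ^ Suc n) * qpoch_inf (zinv * qq ^ Suc n))" for n
  have SB: "Sbar = suminf St" unfolding Sbar_def St_def Let_def by simp
  have ph0: "(1 - zz) * (1 - zinv) = ph qq ww 0" using F1[of 0] by simp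
  have ogS: "og n (St n)" for n
  proof -
    have "og (Suc n + 0) (qq ^ Suc n * (qpoch_inf (- (qq ^ (Suc n + 1))) * qpoch_inf (qq ^ (Suc n + 1))
      * inverse (qpoch_inf (zz * qq ^ Suc n) * qpoch_inf (zinv * qq ^ Suc n))))"
      by (rule og_mult[OF og_qpow[of _ 1, simplified] og_0])
    then show ?thesis unfolding St_def using og_mono[of "Suc n + 0" _ n] by (simp add: mult.assoc)
  qed
  have s1: "ceq K (VV 1 * ((1 - zz) * (1 - zinv) * Sbar)) (\<Sum>n<K. VV 1 * ph qq ww 0 * St n)"
    unfolding SB ph0 mult.assoc[of "VV 1"] sum_distrib_left[symmetric]
    by (rule ceq_mult[OF ceq_refl ceq_mult[OF ceq_refl suminf_ceq[OF ogS]]]) simp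
  have s2: "ceq K (VV 1 * ph qq ww 0 * St n) (Rt qq ww K (Suc n))" if n: "n < K" for n
  proof -
    have V0: "VV (Suc n) * inverse (VV (Suc n)) = 1" by (rule unit_inv[OF VV_0]) simp
    have P: "ph qq ww 0 * Pr qq ww 1 n = Pr qq ww 0 (Suc n)" by (simp add: Pr_Suc')
    have "VV 1 * ph qq ww 0 * St n = qq ^ Suc n * (ph qq ww 0 * Pr qq ww 1 n) * UU (Suc n) * (VV (Suc n) * inverse (VV (Suc n)))"
      unfolding St_def VV_split[of n] UU_def by (simp add: VV_def algebra_simps)
    also have "\<dots> = qq ^ Suc n * Pr qq ww 0 (Suc n) * UU (Suc n)" unfolding V0 P by simp
    finally have e: "VV 1 * ph qq ww 0 * St n = qq ^ Suc n * Pr qq ww 0 (Suc n) * UU (Suc n)" .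
    have "ceq K (qq ^ Suc n * Pr qq ww 0 (Suc n) * UU (Suc n))
       (qq ^ Suc n * Pr qq ww 0 (Suc n) * (\<Prod>j<K - Suc n. 1 - qq^(2*(Suc n + 1 + j))))"
      by (rule ceq_mult[OF ceq_refl UU_ceq]) (use n in simp)
    then show ?thesis unfolding e Rt_def by simp
  qed
  have s4: "VV 1 * Mbar_gen = UU 0"
  proof -
    have V0: "VV 1 * inverse (VV 1) = 1" by (rule unit_inv[OF VV_0]) simp
    have "VV 1 * Mbar_gen = UU 0 * (VV 1 * inverse (VV 1))"
      unfolding Mbar_gen_def UU_def by (simp add: VV_def algebra_simps)
    also have "\<dots> = UU 0" by (simp only: V0 mult_1_right)
    finally show ?thesis .
  qed
  have s5: "ceq K (UU 0) (Rt qq ww K 0)"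
    using UU_ceq[of 0 K] by (simp add: Rt_def Pr_def)
  have "ceq K (\<Sum>n<K. VV 1 * ph qq ww 0 * St n) (\<Sum>n<K. Rt qq ww K (Suc n))" by (rule ceq_sum) (use s2 in auto)
  from ceq_add[OF ceq_trans[OF s1 this] s5[folded s4]]
  have "ceq K (VV 1 * ((1 - zz) * (1 - zinv) * Sbar) + VV 1 * Mbar_gen) ((\<Sum>n<K. Rt qq ww K (Suc n)) + Rt qq ww K 0)" .
  then show ?thesis unfolding RR_def sum.lessThan_Suc_shift by (simp add: add.commute)
qed

theorem main_eq: "(1 - zz) * (1 - zinv) * Sbar = Nbar_gen - Mbar_gen"
proof -
  have hq: "1 - qq^(Suc n) \<noteq> (0::qz_series)" for n
  proof
    assume "1 - qq^(Suc n) = (0::qz_series)"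
    then have "(1 - qq^(Suc n)) $ 0 = (0::qz_series) $ 0" by simp
    then show False by (simp add: qq_def)
  qed
  have hph: "ph qq ww (Suc n) \<noteq> 0" for n
  proof
    assume "ph qq ww (Suc n) = 0"
    then have "Pr qq ww (Suc n) 1 = 0" by (simp add: Pr_def)
    moreover have "Pr qq ww (Suc n) 1 $ 0 = 1" by (rule Pr_0) simp
    ultimately show False by simp
  qed
  have "VV 1 * ((1 - zz) * (1 - zinv) * Sbar) = VV 1 * (Nbar_gen - Mbar_gen)"
  proof (rule ceq_all)
    fix K
    have a: "ceq K (VV 1 * Nbar_gen) (RR qq ww K)" using part_a[of K] LL_RR[OF hq hph, of K] by simp
    have "ceq K (VV 1 * ((1 - zz) * (1 - zinv) * Sbar) + VV 1 * Mbar_gen) (VV 1 * Nbar_gen)"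
      by (rule ceq_trans[OF part_b ceq_sym[OF a]])
    then have "ceq K (VV 1 * ((1 - zz) * (1 - zinv) * Sbar) + VV 1 * Mbar_gen - VV 1 * Mbar_gen)
        (VV 1 * Nbar_gen - VV 1 * Mbar_gen)" by (rule ceq_diff[OF _ ceq_refl])
    then show "ceq K (VV 1 * ((1 - zz) * (1 - zinv) * Sbar)) (VV 1 * (Nbar_gen - Mbar_gen))"
      by (simp add: algebra_simps)
  qed
  moreover have "VV 1 \<noteq> 0"
  proof
    assume "VV 1 = 0" then have "VV 1 $ 0 = 0" by simp
    with VV_0[of 1] show False by simp
  qed
  ultimately show ?thesis by simp
qed

theorem theorem2p1:
  fixes m :: int and n :: nat
  shows "fls_nth (fps_nth ((1 - zz) * (1 - zinv) * Sbar) n) m = Nbar m n - Mbar m n"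
  unfolding main_eq Nbar_def Mbar_def by simp

end
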